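(* Let $\mathcal{A}$ be a topological ring, let $\mathcal{B}$ be a topological $\mathcal{A}$-algebra and let $c\colon\mathcal{B}\to\widehat{\mathcal{B}}$ be the separated completion of $\mathcal{B}$. Then for every continuous iterated higher $\mathcal{A}$-derivation $D=\{D^{(i)}\}_{i\ge0}$ of $\mathcal{B}$ there exists a unique continuous iterated higher $\mathcal{A}$-derivation $\widehat{D}=\{\widehat{D}^{(i)}\}_{i\ge0}$ of $\widehat{\mathcal{B}}$ such that $\widehat{D}^{(i)}\circ c=c\circ D^{(i)}$ for every $i\ge0$. Furthermore, if $D$ is topologically integrable, then so is $\widehat{D}$.
   Context: Conventions: topological rings are linearly topologized with a countable fundamental system of open ideals; homomorphisms are continuous; a topological $\mathcal{A}$-algebra is a topological ring with a continuous homomorphism from $\mathcal{A}$. The separated completion is $\widehat{\mathcal{B}}=\varprojlim_{\mathfrak{b}}\mathcal{B}/\mathfrak{b}$ over open ideals (quotients discrete) with inverse limit topology, and $c$ the canonical map. A continuous iterated higher $\mathcal{A}$-derivation of $\mathcal{B}$ is a family $\{D^{(i)}\}_{i\ge0}$ of continuous $\mathcal{A}$-module homomorphisms $\mathcal{B}\to\mathcal{B}$ with $D^{(0)}=\mathrm{id}$, $D^{(i)}(bb')=\sum_{j=0}^iD^{(j)}(b)D^{(i-j)}(b')$, and $D^{(i)}\circ D^{(j)}=\binom{i+j}{i}D^{(i+j)}$. It is topologically integrable if $(D^{(i)})_i$ converges continuously to $0$: for every $b$ and every open ideal $\mathfrak{b}'$ there exist an open ideal $\mathfrak{b}$ and $n_0$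 with $D^{(n)}(b+\mathfrak{b})\subseteq\mathfrak{b}'$ for all $n\ge n_0$. *)

theory Defs
  imports "HOL-Algebra.QuotRing" "HOL-Library.Countable_Set"
begin

text \<open>A linearly topologized (commutative) ring: the topology is given by a countable,
  nonempty, downward directed family F of ideals, a fundamental system of open ideals.\<close>
definition top_ring :: "('a, 'm) ring_scheme \<Rightarrow> 'a set set \<Rightarrow> bool" where
  "top_ring R F \<longleftrightarrow> cring R \<and> F \<noteq> {} \<and> countable F \<and> (\<forall>I\<in>F. ideal I R) \<and>
     (\<forall>I\<in>F. \<forall>J\<in>F. \<exists>K\<in>F. K \<subseteq> I \<inter> J)"

definition open_ideal :: "('a, 'm) ring_scheme \<Rightarrow> 'a set set \<Rightarrow> 'a set \<Rightarrow> bool" where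
  "open_ideal R F I \<longleftrightarrow> ideal I R \<and> (\<exists>J\<in>F. J \<subseteq> I)"

definition top_continuous ::
  "('a, 'm) ring_scheme \<Rightarrow> 'a set set \<Rightarrow> ('b, 'n) ring_scheme \<Rightarrow> 'b set set \<Rightarrow> ('a \<Rightarrow> 'b) \<Rightarrow> bool" where
  "top_continuous R F S G f \<longleftrightarrow>
     (\<forall>x\<in>carrier R. \<forall>I. open_ideal S G I \<longrightarrow>
        (\<exists>J. open_ideal R F J \<and> (\<forall>y\<in>carrier R. y \<ominus>\<^bsub>R\<^esub> x \<in> J \<longrightarrow> f y \<ominus>\<^bsub>S\<^esub> f x \<in> I)))"

definition top_algebra ::
  "('a, 'm) ring_scheme \<Rightarrow> 'a set set \<Rightarrow> ('b, 'n) ring_scheme \<Rightarrow> 'b set set \<Rightarrow> ('a \<Rightarrow> 'b) \<Rightarrow> bool" where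
  "top_algebra A FA B FB phi \<longleftrightarrow> top_ring A FA \<and> top_ring B FB \<and> phi \<in> ring_hom A B \<and>
     top_continuous A FA B FB phi"

definition cont_iter_higher_deriv ::
  "('a, 'm) ring_scheme \<Rightarrow> ('b, 'n) ring_scheme \<Rightarrow> 'b set set \<Rightarrow> ('a \<Rightarrow> 'b) \<Rightarrow> (nat \<Rightarrow> 'b \<Rightarrow> 'b) \<Rightarrow> bool" where
  "cont_iter_higher_deriv A B FB phi D \<longleftrightarrow>
     (\<forall>i. D i \<in> carrier B \<rightarrow> carrier B) \<and>
     (\<forall>i. top_continuous B FB B FB (D i)) \<and>
     (\<forall>i. \<forall>x\<in>carrier B. \<forall>y\<in>carrier B. D i (x \<oplus>\<^bsub>B\<^esub> y) = D i x \<oplus>\<^bsub>B\<^esub> D i y) \<and>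
     (\<forall>i. \<forall>a\<in>carrier A. \<forall>x\<in>carrier B. D i (phi a \<otimes>\<^bsub>B\<^esub> x) = phi a \<otimes>\<^bsub>B\<^esub> D i x) \<and>
     (\<forall>x\<in>carrier B. D 0 x = x) \<and>
     (\<forall>i. \<forall>x\<in>carrier B. \<forall>y\<in>carrier B.
        D i (x \<otimes>\<^bsub>B\<^esub> y) = (\<Oplus>\<^bsub>B\<^esub>j\<in>{..i}. D j x \<otimes>\<^bsub>B\<^esub> D (i - j) y)) \<and>
     (\<forall>i j. \<forall>x\<in>carrier B. D i (D j x) = add_pow B ((i + j) choose i) (D (i + j) x))"

text \<open>Topological integrability: (D n)_n converges continuously to 0.\<close>
definition top_integrable :: "('b, 'n) ring_scheme \<Rightarrow> 'b set set \<Rightarrow> (nat \<Rightarrow> 'b \<Rightarrow> 'b) \<Rightarrow> bool" where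
  "top_integrable B FB D \<longleftrightarrow>
     (\<forall>x\<in>carrier B. \<forall>I'. open_ideal B FB I' \<longrightarrow>
        (\<exists>I n0. open_ideal B FB I \<and>
           (\<forall>n\<ge>n0. \<forall>y\<in>carrier B. y \<ominus>\<^bsub>B\<^esub> x \<in> I \<longrightarrow> D n y \<in> I')))"

text \<open>Separated completion: compatible families of cosets indexed by open ideals
  (value {} at non-open sets), with componentwise quotient-ring operations.\<close>
definition completion :: "('b, 'n) ring_scheme \<Rightarrow> 'b set set \<Rightarrow> ('b set \<Rightarrow> 'b set) ring" where
  "completion B F =
    \<lparr> carrier = {x. (\<forall>I. open_ideal B F I \<longrightarrow> x I \<in> carrier (B Quot I)) \<and>
                   (\<forall>I J. open_ideal B F I \<longrightarrow> open_ideal B F J \<longrightarrow> I \<subseteq> J \<longrightarrow> x I \<subseteq> x J) \<and>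
                   (\<forall>I. \<not> open_ideal B F I \<longrightarrow> x I = {})},
      mult = (\<lambda>x y I. if open_ideal B F I then x I \<otimes>\<^bsub>B Quot I\<^esub> y I else {}),
      one = (\<lambda>I. if open_ideal B F I then \<one>\<^bsub>B Quot I\<^esub> else {}),
      zero = (\<lambda>I. if open_ideal B F I then \<zero>\<^bsub>B Quot I\<^esub> else {}),
      add = (\<lambda>x y I. if open_ideal B F I then x I \<oplus>\<^bsub>B Quot I\<^esub> y I else {}) \<rparr>"

text \<open>Fundamental system of open ideals of the completion (inverse limit topology):
  kernels of the projections to B/I, I in F.\<close>
definition completion_fs :: "('b, 'n) ring_scheme \<Rightarrow> 'b set set \<Rightarrow> ('b set \<Rightarrow> 'b set) set set" where
  "completion_fs B F = (\<lambda>I. {x \<in> carrier (completion B F). x I = I}) ` F"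

definition compl_map :: "('b, 'n) ring_scheme \<Rightarrow> 'b set set \<Rightarrow> 'b \<Rightarrow> ('b set \<Rightarrow> 'b set)" where
  "compl_map B F b = (\<lambda>I. if open_ideal B F I then I +>\<^bsub>B\<^esub> b else {})"

end

theory Submission
  imports Defs "HOL-Algebra.Multiplicative_Group"
begin

locale cmpl =
  fixes B :: "('b, 'n) ring_scheme" (structure) and F :: "'b set set"
  assumes tr: "top_ring B F"
begin

sublocale cring B using tr unfolding top_ring_def by simp

abbreviation "opn I \<equiv> open_ideal B F I"
abbreviation "C \<equiv> completion B F"
abbreviation "Q I \<equiv> B Quot I"

lemma opn_ideal: "opn I \<Longrightarrow> ideal I B"
  unfolding open_ideal_def by simp

lemma F_opn: "I \<in> F \<Longrightarrow> opn I"
  using tr unfolding top_ring_def open_ideal_def by blast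

lemma opn_Int: assumes "opn I" "opn J" shows "opn (I \<inter> J)"
proof -
  obtain I0 J0 where "I0 \<in> F" "J0 \<in> F" "I0 \<subseteq> I" "J0 \<subseteq> J"
    using assms unfolding open_ideal_def by blast
  then obtain K where "K \<in> F" "K \<subseteq> I \<inter> J" using tr unfolding top_ring_def by blast
  moreover have "ideal (I \<inter> J) B" using assms opn_ideal i_intersect by blast
  ultimately show ?thesis unfolding open_ideal_def by blast
qed

lemma opn_F: "opn I \<Longrightarrow> \<exists>J\<in>F. J \<subseteq> I"
  unfolding open_ideal_def by blast

lemma F_dir: "I \<in> F \<Longrightarrow> J \<in> F \<Longrightarrow> \<exists>K\<in>F. K \<subseteq> I \<inter> J"
  using tr unfolding top_ring_def by blast

lemma opn_carrier: "opn I \<Longrightarrow> I \<subseteq> carrier B"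
  using ideal.Icarr[OF opn_ideal] by blast

lemma Q_cring: "opn I \<Longrightarrow> cring (Q I)"
  using opn_ideal ideal.quotient_is_cring is_cring by blast

lemma nu_hom: "opn I \<Longrightarrow> ring_hom_cring B (Q I) (\<lambda>a. I +> a)"
  using opn_ideal ideal.rcos_ring_hom_cring is_cring by blast

lemma carrier_Q: "carrier (Q I) = a_rcosets I"
  by (simp add: FactRing_def)

lemma Q_zero: "\<zero>\<^bsub>Q I\<^esub> = I"
  by (simp add: FactRing_def)

lemma coset_in_Q: "opn I \<Longrightarrow> a \<in> carrier B \<Longrightarrow> I +> a \<in> carrier (Q I)"
  using ring_hom_memE(1)[OF ring_hom_cring.homh[OF nu_hom]] by blast

lemma Q_elem: "X \<in> carrier (Q I) \<Longrightarrow> \<exists>a\<in>carrier B. X = I +> a"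
  unfolding carrier_Q A_RCOSETS_def RCOSETS_def a_r_coset_def by auto

lemma subgrp: "opn I \<Longrightarrow> subgroup I (add_monoid B)"
  using opn_ideal ideal.axioms(1) additive_subgroup.a_subgroup by blast

lemma coset_self: "opn I \<Longrightarrow> a \<in> carrier B \<Longrightarrow> a \<in> I +> a"
proof -
  assume "opn I" "a \<in> carrier B"
  then interpret ideal I B using opn_ideal by blast
  show ?thesis using a_rcos_self \<open>a \<in> carrier B\<close> by blast
qed

lemma coset_repr: "opn I \<Longrightarrow> a \<in> carrier B \<Longrightarrow> b \<in> I +> a \<Longrightarrow> I +> b = I +> a"
  using a_repr_independence[OF _ _ subgrp] by blast

lemma coset_carr: "opn I \<Longrightarrow> a \<in> carrier B \<Longrightarrow> b \<in> I +> a \<Longrightarrow> b \<in> carrier B"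
proof -
  assume "opn I" "a \<in> carrier B" "b \<in> I +> a"
  then interpret ideal I B using opn_ideal by blast
  show ?thesis using a_elemrcos_carrier \<open>a \<in> carrier B\<close> \<open>b \<in> I +> a\<close> by blast
qed

lemma coset_mono: "I \<subseteq> J \<Longrightarrow> I +> a \<subseteq> J +> a"
  unfolding a_r_coset_def r_coset_def by auto

lemma coset_eq_iff: "opn I \<Longrightarrow> a \<in> carrier B \<Longrightarrow> b \<in> carrier B \<Longrightarrow> (I +> a = I +> b) = (a \<ominus> b \<in> I)"
  using quotient_eq_iff_same_a_r_cos opn_ideal by blast

lemma coset_zero: "opn I \<Longrightarrow> a \<in> I \<Longrightarrow> I +> a = I"
proof -
  assume "opn I" "a \<in> I"
  then interpret ideal I B using opn_ideal by blast
  show ?thesis using a_rcos_const \<open>a \<in> I\<close> by blast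
qed


lemma C_mult: "x \<otimes>\<^bsub>C\<^esub> y = (\<lambda>I. if opn I then x I \<otimes>\<^bsub>Q I\<^esub> y I else {})"
  by (simp add: completion_def)
lemma C_add: "x \<oplus>\<^bsub>C\<^esub> y = (\<lambda>I. if opn I then x I \<oplus>\<^bsub>Q I\<^esub> y I else {})"
  by (simp add: completion_def)
lemma C_one: "\<one>\<^bsub>C\<^esub> = (\<lambda>I. if opn I then \<one>\<^bsub>Q I\<^esub> else {})"
  by (simp add: completion_def)
lemma C_zero: "\<zero>\<^bsub>C\<^esub> = (\<lambda>I. if opn I then \<zero>\<^bsub>Q I\<^esub> else {})"
  by (simp add: completion_def)

lemma C_memD: "x \<in> carrier C \<Longrightarrow> opn I \<Longrightarrow> x I \<in> carrier (Q I)"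
  by (simp add: completion_def)
lemma C_compat: "x \<in> carrier C \<Longrightarrow> opn I \<Longrightarrow> opn J \<Longrightarrow> I \<subseteq> J \<Longrightarrow> x I \<subseteq> x J"
  by (simp add: completion_def)
lemma C_non: "x \<in> carrier C \<Longrightarrow> \<not> opn I \<Longrightarrow> x I = {}"
  by (simp add: completion_def)
lemma C_memI:
  assumes "\<And>I. opn I \<Longrightarrow> x I \<in> carrier (Q I)"
    and "\<And>I J. opn I \<Longrightarrow> opn J \<Longrightarrow> I \<subseteq> J \<Longrightarrow> x I \<subseteq> x J"
    and "\<And>I. \<not> opn I \<Longrightarrow> x I = {}"
  shows "x \<in> carrier C"
  using assms by (simp add: completion_def)

lemma C_ex: assumes "x \<in> carrier C" "opn I" shows "\<exists>a. a \<in> x I"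
proof -
  obtain a where "a \<in> carrier B" "x I = I +> a" using Q_elem C_memD[OF assms] by blast
  then show ?thesis using coset_self[OF assms(2)] by blast
qed

lemma C_rep: assumes "x \<in> carrier C" "opn I" "a \<in> x I"
  shows "a \<in> carrier B" "x I = I +> a"
proof -
  obtain a0 where a0: "a0 \<in> carrier B" "x I = I +> a0" using Q_elem C_memD[OF assms(1,2)] by blast
  show "a \<in> carrier B" using coset_carr[OF assms(2) a0(1)] assms(3) a0(2) by simp
  show "x I = I +> a" using coset_repr[OF assms(2) a0(1)] assms(3) a0(2) by simp
qed

lemma C_fine: assumes "x \<in> carrier C" "opn I" "opn J" "J \<subseteq> I" "a \<in> x J"
  shows "x I = I +> a"
proof -
  have "a \<in> x I" using C_compat[OF assms(1,3,2,4)] assms(5) by blast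
  then show ?thesis using C_rep[OF assms(1,2)] by blast
qed

lemma C_eqI: assumes "x \<in> carrier C" "y \<in> carrier C" "\<And>I. opn I \<Longrightarrow> x I = y I"
  shows "x = y"
proof
  fix I show "x I = y I"
    using assms C_non[OF assms(1)] C_non[OF assms(2)] by (cases "opn I") auto
qed

lemma nu_add: "opn I \<Longrightarrow> a \<in> carrier B \<Longrightarrow> b \<in> carrier B \<Longrightarrow> (I +> a) \<oplus>\<^bsub>Q I\<^esub> (I +> b) = I +> (a \<oplus> b)"
  using ring_hom_add[OF ring_hom_cring.homh[OF nu_hom]] by metis
lemma nu_mult: "opn I \<Longrightarrow> a \<in> carrier B \<Longrightarrow> b \<in> carrier B \<Longrightarrow> (I +> a) \<otimes>\<^bsub>Q I\<^esub> (I +> b) = I +> (a \<otimes> b)"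
  using ring_hom_mult[OF ring_hom_cring.homh[OF nu_hom]] by metis
lemma nu_one: "opn I \<Longrightarrow> \<one>\<^bsub>Q I\<^esub> = I +> \<one>"
  using ring_hom_one[OF ring_hom_cring.homh[OF nu_hom]] by metis
lemma nu_zero: "opn I \<Longrightarrow> \<zero>\<^bsub>Q I\<^esub> = I +> \<zero>"
  using ring_hom_cring.hom_zero[OF nu_hom] by metis
lemma nu_inv: "opn I \<Longrightarrow> a \<in> carrier B \<Longrightarrow> \<ominus>\<^bsub>Q I\<^esub> (I +> a) = I +> (\<ominus> a)"
  using ring_hom_cring.hom_a_inv[OF nu_hom] by metis

lemma C_add_closed: assumes x: "x \<in> carrier C" and y: "y \<in> carrier C"
  shows "x \<oplus>\<^bsub>C\<^esub> y \<in> carrier C"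
proof (rule C_memI)
  fix I assume I: "opn I"
  interpret q: cring "Q I" using Q_cring[OF I] .
  show "(x \<oplus>\<^bsub>C\<^esub> y) I \<in> carrier (Q I)"
    using I C_memD[OF x I] C_memD[OF y I] by (simp add: C_add)
next
  fix I J assume I: "opn I" and J: "opn J" and IJ: "I \<subseteq> J"
  obtain a b where ab: "a \<in> x I" "b \<in> y I" using C_ex[OF x I] C_ex[OF y I] by blast
  have a: "a \<in> carrier B" "x I = I +> a" "x J = J +> a" using C_rep[OF x I ab(1)] C_fine[OF x J I IJ ab(1)] by auto
  have b: "b \<in> carrier B" "y I = I +> b" "y J = J +> b" using C_rep[OF y I ab(2)] C_fine[OF y J I IJ ab(2)] by auto
  show "(x \<oplus>\<^bsub>C\<^esub> y) I \<subseteq> (x \<oplus>\<^bsub>C\<^esub> y) J"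
    using I J a b by (simp add: C_add nu_add coset_mono[OF IJ])
next
  fix I assume "\<not> opn I" then show "(x \<oplus>\<^bsub>C\<^esub> y) I = {}" by (simp add: C_add)
qed

lemma C_mult_closed: assumes x: "x \<in> carrier C" and y: "y \<in> carrier C"
  shows "x \<otimes>\<^bsub>C\<^esub> y \<in> carrier C"
proof (rule C_memI)
  fix I assume I: "opn I"
  interpret q: cring "Q I" using Q_cring[OF I] .
  show "(x \<otimes>\<^bsub>C\<^esub> y) I \<in> carrier (Q I)"
    using I C_memD[OF x I] C_memD[OF y I] by (simp add: C_mult)
next
  fix I J assume I: "opn I" and J: "opn J" and IJ: "I \<subseteq> J"
  obtain a b where ab: "a \<in> x I" "b \<in> y I" using C_ex[OF x I] C_ex[OF y I] by blast
  have a: "a \<in> carrier B" "x I = I +> a" "x J = J +> a" using C_rep[OF x I ab(1)] C_fine[OF x J I IJ ab(1)] by auto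
  have b: "b \<in> carrier B" "y I = I +> b" "y J = J +> b" using C_rep[OF y I ab(2)] C_fine[OF y J I IJ ab(2)] by auto
  show "(x \<otimes>\<^bsub>C\<^esub> y) I \<subseteq> (x \<otimes>\<^bsub>C\<^esub> y) J"
    using I J a b by (simp add: C_mult nu_mult coset_mono[OF IJ])
next
  fix I assume "\<not> opn I" then show "(x \<otimes>\<^bsub>C\<^esub> y) I = {}" by (simp add: C_mult)
qed

lemma C_one_closed: "\<one>\<^bsub>C\<^esub> \<in> carrier C"
proof (rule C_memI)
  fix I assume I: "opn I"
  interpret q: cring "Q I" using Q_cring[OF I] .
  show "\<one>\<^bsub>C\<^esub> I \<in> carrier (Q I)" using I by (simp add: C_one)
next
  fix I J assume I: "opn I" and J: "opn J" and IJ: "I \<subseteq> J"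
  show "\<one>\<^bsub>C\<^esub> I \<subseteq> \<one>\<^bsub>C\<^esub> J" using I J by (simp add: C_one nu_one coset_mono[OF IJ])
qed (simp add: C_one)

lemma C_zero_closed: "\<zero>\<^bsub>C\<^esub> \<in> carrier C"
proof (rule C_memI)
  fix I assume I: "opn I"
  interpret q: cring "Q I" using Q_cring[OF I] .
  show "\<zero>\<^bsub>C\<^esub> I \<in> carrier (Q I)" using I by (simp add: C_zero)
next
  fix I J assume I: "opn I" and J: "opn J" and IJ: "I \<subseteq> J"
  show "\<zero>\<^bsub>C\<^esub> I \<subseteq> \<zero>\<^bsub>C\<^esub> J" using I J by (simp add: C_zero nu_zero coset_mono[OF IJ])
qed (simp add: C_zero)

lemma C_inv_ex: assumes x: "x \<in> carrier C" shows "\<exists>y\<in>carrier C. y \<oplus>\<^bsub>C\<^esub> x = \<zero>\<^bsub>C\<^esub>"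
proof -
  define y where "y = (\<lambda>I. if opn I then \<ominus>\<^bsub>Q I\<^esub> (x I) else {})"
  have yc: "y \<in> carrier C"
  proof (rule C_memI)
    fix I assume I: "opn I"
    interpret q: cring "Q I" using Q_cring[OF I] .
    show "y I \<in> carrier (Q I)" using I C_memD[OF x I] by (simp add: y_def)
  next
    fix I J assume I: "opn I" and J: "opn J" and IJ: "I \<subseteq> J"
    obtain a where ab: "a \<in> x I" using C_ex[OF x I] by blast
    have a: "a \<in> carrier B" "x I = I +> a" "x J = J +> a" using C_rep[OF x I ab(1)] C_fine[OF x J I IJ ab(1)] by auto
    show "y I \<subseteq> y J" using I J a by (simp add: y_def nu_inv coset_mono[OF IJ])
  qed (simp add: y_def)
  have "y \<oplus>\<^bsub>C\<^esub> x = \<zero>\<^bsub>C\<^esub>"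
  proof
    fix I show "(y \<oplus>\<^bsub>C\<^esub> x) I = \<zero>\<^bsub>C\<^esub> I"
    proof (cases "opn I")
      case True
      interpret q: cring "Q I" using Q_cring[OF True] .
      show ?thesis using True C_memD[OF x True] by (simp add: y_def C_add C_zero q.l_neg)
    qed (simp add: C_add C_zero)
  qed
  then show ?thesis using yc by blast
qed

lemma C_cring: "cring C"
proof (rule cringI)
  show "abelian_group C"
  proof (rule abelian_groupI)
    fix x y z assume x: "x \<in> carrier C" and y: "y \<in> carrier C" and z: "z \<in> carrier C"
    show "x \<oplus>\<^bsub>C\<^esub> y \<oplus>\<^bsub>C\<^esub> z = x \<oplus>\<^bsub>C\<^esub> (y \<oplus>\<^bsub>C\<^esub> z)"
    proof
      fix I show "(x \<oplus>\<^bsub>C\<^esub> y \<oplus>\<^bsub>C\<^esub> z) I = (x \<oplus>\<^bsub>C\<^esub> (y \<oplus>\<^bsub>C\<^esub> z)) I"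
      proof (cases "opn I")
        case True
        interpret q: cring "Q I" using Q_cring[OF True] .
        show ?thesis using True C_memD[OF x True] C_memD[OF y True] C_memD[OF z True]
          by (simp add: C_add q.a_assoc)
      qed (simp add: C_add)
    qed
  next
    fix x y assume x: "x \<in> carrier C" and y: "y \<in> carrier C"
    show "x \<oplus>\<^bsub>C\<^esub> y = y \<oplus>\<^bsub>C\<^esub> x"
    proof
      fix I show "(x \<oplus>\<^bsub>C\<^esub> y) I = (y \<oplus>\<^bsub>C\<^esub> x) I"
      proof (cases "opn I")
        case True
        interpret q: cring "Q I" using Q_cring[OF True] .
        show ?thesis using True C_memD[OF x True] C_memD[OF y True]
          by (simp add: C_add q.a_comm)
      qed (simp add: C_add)
    qed
  next
    fix x assume x: "x \<in> carrier C"
    show "\<zero>\<^bsub>C\<^esub> \<oplus>\<^bsub>C\<^esub> x = x"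
    proof
      fix I show "(\<zero>\<^bsub>C\<^esub> \<oplus>\<^bsub>C\<^esub> x) I = x I"
      proof (cases "opn I")
        case True
        interpret q: cring "Q I" using Q_cring[OF True] .
        show ?thesis using True C_memD[OF x True] by (simp add: C_add C_zero)
      qed (simp add: C_add C_zero C_non[OF x])
    qed
  qed (auto simp: C_add_closed C_zero_closed C_inv_ex)
next
  show "comm_monoid C"
  proof (rule comm_monoidI)
    fix x y z assume x: "x \<in> carrier C" and y: "y \<in> carrier C" and z: "z \<in> carrier C"
    show "x \<otimes>\<^bsub>C\<^esub> y \<otimes>\<^bsub>C\<^esub> z = x \<otimes>\<^bsub>C\<^esub> (y \<otimes>\<^bsub>C\<^esub> z)"
    proof
      fix I show "(x \<otimes>\<^bsub>C\<^esub> y \<otimes>\<^bsub>C\<^esub> z) I = (x \<otimes>\<^bsub>C\<^esub> (y \<otimes>\<^bsub>C\<^esub> z)) I"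
      proof (cases "opn I")
        case True
        interpret q: cring "Q I" using Q_cring[OF True] .
        show ?thesis using True C_memD[OF x True] C_memD[OF y True] C_memD[OF z True]
          by (simp add: C_mult q.m_assoc)
      qed (simp add: C_mult)
    qed
  next
    fix x y assume x: "x \<in> carrier C" and y: "y \<in> carrier C"
    show "x \<otimes>\<^bsub>C\<^esub> y = y \<otimes>\<^bsub>C\<^esub> x"
    proof
      fix I show "(x \<otimes>\<^bsub>C\<^esub> y) I = (y \<otimes>\<^bsub>C\<^esub> x) I"
      proof (cases "opn I")
        case True
        interpret q: cring "Q I" using Q_cring[OF True] .
        show ?thesis using True C_memD[OF x True] C_memD[OF y True]
          by (simp add: C_mult q.m_comm)
      qed (simp add: C_mult)
    qed
  next
    fix x assume x: "x \<in> carrier C"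
    show "\<one>\<^bsub>C\<^esub> \<otimes>\<^bsub>C\<^esub> x = x"
    proof
      fix I show "(\<one>\<^bsub>C\<^esub> \<otimes>\<^bsub>C\<^esub> x) I = x I"
      proof (cases "opn I")
        case True
        interpret q: cring "Q I" using Q_cring[OF True] .
        show ?thesis using True C_memD[OF x True] by (simp add: C_mult C_one)
      qed (simp add: C_mult C_one C_non[OF x])
    qed
  qed (auto simp: C_mult_closed C_one_closed)
next
  fix x y z assume x: "x \<in> carrier C" and y: "y \<in> carrier C" and z: "z \<in> carrier C"
  show "(x \<oplus>\<^bsub>C\<^esub> y) \<otimes>\<^bsub>C\<^esub> z = x \<otimes>\<^bsub>C\<^esub> z \<oplus>\<^bsub>C\<^esub> y \<otimes>\<^bsub>C\<^esub> z"
  proof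
    fix I show "((x \<oplus>\<^bsub>C\<^esub> y) \<otimes>\<^bsub>C\<^esub> z) I = (x \<otimes>\<^bsub>C\<^esub> z \<oplus>\<^bsub>C\<^esub> y \<otimes>\<^bsub>C\<^esub> z) I"
    proof (cases "opn I")
      case True
      interpret q: cring "Q I" using Q_cring[OF True] .
      show ?thesis using True C_memD[OF x True] C_memD[OF y True] C_memD[OF z True]
        by (simp add: C_mult C_add q.l_distr)
    qed (simp add: C_mult C_add)
  qed
qed


lemma pi_homh: assumes I: "opn I" shows "(\<lambda>x. x I) \<in> ring_hom C (Q I)"
proof -
  interpret q: cring "Q I" using Q_cring[OF I] .
  show ?thesis
    by (rule ring_hom_memI) (auto simp: C_memD[OF _ I] C_mult C_add C_one I)
qed

lemma pi_hom_ring: "opn I \<Longrightarrow> ring_hom_ring C (Q I) (\<lambda>x. x I)"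
  using ring_hom_ringI2[OF cring.axioms(1)[OF C_cring] cring.axioms(1)[OF Q_cring] pi_homh] by blast

lemma pi_hom: "opn I \<Longrightarrow> ring_hom_cring C (Q I) (\<lambda>x. x I)"
  using ring_hom_cringI[OF C_cring Q_cring pi_homh] by blast

lemma c_at: "opn I \<Longrightarrow> compl_map B F b I = I +> b"
  by (simp add: compl_map_def)
lemma c_non: "\<not> opn I \<Longrightarrow> compl_map B F b I = {}"
  by (simp add: compl_map_def)

lemma c_carrier: assumes b: "b \<in> carrier B" shows "compl_map B F b \<in> carrier C"
proof (rule C_memI)
  fix I J assume I: "opn I" and J: "opn J" and IJ: "I \<subseteq> J"
  show "compl_map B F b I \<subseteq> compl_map B F b J" using I J by (simp add: c_at coset_mono[OF IJ])
qed (auto simp: c_at c_non coset_in_Q b)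

abbreviation "K I \<equiv> {x \<in> carrier C. x I = I}"

lemma K_ideal: assumes I: "opn I" shows "ideal (K I) C"
proof -
  interpret h: ring_hom_ring C "Q I" "\<lambda>x. x I" using pi_hom_ring[OF I] .
  show ?thesis using h.kernel_is_ideal unfolding a_kernel_def' Q_zero .
qed

lemma K_open: "I \<in> F \<Longrightarrow> open_ideal C (completion_fs B F) (K I)"
  unfolding open_ideal_def completion_fs_def using K_ideal F_opn by blast

lemma openC_K: "open_ideal C (completion_fs B F) I' \<Longrightarrow> \<exists>I\<in>F. K I \<subseteq> I'"
  unfolding open_ideal_def completion_fs_def by blast

lemma K_mono: assumes I: "opn I" and J: "opn J" and IJ: "I \<subseteq> J" shows "K I \<subseteq> K J"
proof
  fix x assume "x \<in> K I"
  then have x: "x \<in> carrier C" and xI: "x I = I" by auto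
  have "\<zero> \<in> I" using ideal.axioms(1)[OF opn_ideal[OF I]] additive_subgroup.zero_closed by blast
  then have "x J = J +> \<zero>" using C_fine[OF x J I IJ] xI by simp
  also have "\<dots> = J" using coset_zero[OF J] ideal.axioms(1)[OF opn_ideal[OF J]] additive_subgroup.zero_closed by blast
  finally show "x \<in> K J" using x by simp
qed

lemma K_minus: assumes x: "x \<in> carrier C" and y: "y \<in> carrier C" and J: "opn J" and b: "b \<in> x J"
  shows "(y \<ominus>\<^bsub>C\<^esub> x \<in> K J) = (b \<in> y J)"
proof -
  interpret h: ring_hom_cring C "Q J" "\<lambda>x. x J" using pi_hom[OF J] .
  have xb: "b \<in> carrier B" "x J = J +> b" using C_rep[OF x J b] by auto
  have "(y \<ominus>\<^bsub>C\<^esub> x) J = y J \<ominus>\<^bsub>Q J\<^esub> x J" using x y by simp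
  moreover have "y \<ominus>\<^bsub>C\<^esub> x \<in> carrier C" using x y by simp
  moreover have "(y J \<ominus>\<^bsub>Q J\<^esub> x J = J) = (y J = x J)"
    using ring.r_right_minus_eq[OF h.S.ring_axioms, of "y J" "x J"] C_memD[OF x J] C_memD[OF y J]
    by (simp add: Q_zero)
  moreover have "(y J = x J) = (b \<in> y J)"
    using xb C_rep[OF y J, of b] coset_self[OF J xb(1)] by auto
  ultimately show ?thesis by simp
qed

definition good :: "('b \<Rightarrow> 'b) \<Rightarrow> bool" where
  "good d \<longleftrightarrow> d \<in> carrier B \<rightarrow> carrier B \<and> (\<forall>a\<in>carrier B. \<forall>b\<in>carrier B. d (a \<oplus> b) = d a \<oplus> d b)
     \<and> (\<forall>I. opn I \<longrightarrow> (\<exists>J. opn J \<and> d ` J \<subseteq> I))"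

lemma good_minus: assumes g: "good d" and a: "a \<in> carrier B" and b: "b \<in> carrier B"
  shows "d (a \<ominus> b) = d a \<ominus> d b"
proof -
  have dc: "d (a \<ominus> b) \<in> carrier B" "d b \<in> carrier B" using g a b unfolding good_def by auto
  have "a = (a \<ominus> b) \<oplus> b" using a b by (simp add: minus_eq a_assoc l_neg)
  then have "d a = d (a \<ominus> b) \<oplus> d b" using g a b unfolding good_def by (metis minus_closed)
  then show ?thesis using dc by (simp add: minus_eq a_assoc r_neg)
qed

lemma good_carr: "good d \<Longrightarrow> a \<in> carrier B \<Longrightarrow> d a \<in> carrier B"
  unfolding good_def by auto

lemma good_J: "good d \<Longrightarrow> opn I \<Longrightarrow> \<exists>J. opn J \<and> d ` J \<subseteq> I"
  unfolding good_def by auto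

lemma good_of:
  assumes "d \<in> carrier B \<rightarrow> carrier B" and add: "\<And>a b. a \<in> carrier B \<Longrightarrow> b \<in> carrier B \<Longrightarrow> d (a \<oplus> b) = d a \<oplus> d b"
    and cont: "top_continuous B F B F d"
  shows "good d"
proof -
  have d0c: "d \<zero> \<in> carrier B" using assms(1) by auto
  have "d \<zero> \<oplus> d \<zero> = d \<zero>" using add[of \<zero> \<zero>] by simp
  then have "(d \<zero> \<oplus> d \<zero>) \<oplus> \<ominus> d \<zero> = d \<zero> \<oplus> \<ominus> d \<zero>" by simp
  then have d0: "d \<zero> = \<zero>" using d0c by (simp add: a_assoc r_neg)
  have "\<exists>J. opn J \<and> d ` J \<subseteq> I" if I: "opn I" for I
  proof -
    obtain J where J: "opn J" "\<And>y. y \<in> carrier B \<Longrightarrow> y \<ominus> \<zero> \<in> J \<Longrightarrow> d y \<ominus> d \<zero> \<in> I"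
      using cont I unfolding top_continuous_def by (meson zero_closed)
    have "d ` J \<subseteq> I"
    proof
      fix z assume "z \<in> d ` J"
      then obtain y where y: "y \<in> J" "z = d y" by blast
      have yc: "y \<in> carrier B" using y(1) opn_carrier[OF J(1)] by blast
      then have "d y \<in> carrier B" using assms(1) by auto
      then show "z \<in> I" using J(2)[OF yc] y yc d0 by (simp add: minus_eq)
    qed
    then show ?thesis using J(1) by blast
  qed
  then show ?thesis using assms unfolding good_def by blast
qed

definition dext :: "('b \<Rightarrow> 'b) \<Rightarrow> ('b set \<Rightarrow> 'b set) \<Rightarrow> ('b set \<Rightarrow> 'b set)" where
  "dext d x = (\<lambda>I. if opn I then I +> d (SOME b. b \<in> x (SOME J. opn J \<and> d ` J \<subseteq> I)) else {})"

lemma d_close: assumes g: "good d" and I: "opn I" and J: "opn J" and dJ: "d ` J \<subseteq> I"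
  and x: "x \<in> carrier C" and b: "b \<in> x J" and c: "c \<in> x J"
  shows "I +> d b = I +> d c"
proof -
  have b': "b \<in> carrier B" "x J = J +> b" using C_rep[OF x J b] by auto
  have c': "c \<in> carrier B" "x J = J +> c" using C_rep[OF x J c] by auto
  have "b \<ominus> c \<in> J" using coset_eq_iff[OF J b'(1) c'(1)] b'(2) c'(2) by simp
  then have "d (b \<ominus> c) \<in> I" using dJ by blast
  then have "d b \<ominus> d c \<in> I" using good_minus[OF g b'(1) c'(1)] by simp
  then show ?thesis using coset_eq_iff[OF I good_carr[OF g b'(1)] good_carr[OF g c'(1)]] by simp
qed

lemma dext_eval: assumes g: "good d" and x: "x \<in> carrier C" and I: "opn I" and J: "opn J"
  and dJ: "d ` J \<subseteq> I" and b: "b \<in> x J"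
  shows "dext d x I = I +> d b"
proof -
  define J0 where "J0 = (SOME J. opn J \<and> d ` J \<subseteq> I)"
  have J0: "opn J0" "d ` J0 \<subseteq> I" unfolding J0_def using someI_ex[OF good_J[OF g I]] by auto
  define b0 where "b0 = (SOME b. b \<in> x J0)"
  have b0: "b0 \<in> x J0" unfolding b0_def using someI_ex[OF C_ex[OF x J0(1)]] .
  have e: "dext d x I = I +> d b0" using I unfolding dext_def J0_def b0_def by simp
  have K: "opn (J \<inter> J0)" using opn_Int[OF J J0(1)] .
  obtain c where c: "c \<in> x (J \<inter> J0)" using C_ex[OF x K] by blast
  have c1: "c \<in> x J" using C_compat[OF x K J] c by blast
  have c2: "c \<in> x J0" using C_compat[OF x K J0(1)] c by blast
  show ?thesis using e d_close[OF g I J dJ x b c1] d_close[OF g I J0(1) J0(2) x b0 c2] by simp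
qed

lemma dext_exists: assumes g: "good d" and x: "x \<in> carrier C" and I: "opn I"
  obtains J b where "opn J" "d ` J \<subseteq> I" "b \<in> x J" "dext d x I = I +> d b"
proof -
  obtain J where J: "opn J" "d ` J \<subseteq> I" using good_J[OF g I] by blast
  obtain b where "b \<in> x J" using C_ex[OF x J(1)] by blast
  then show ?thesis using that J dext_eval[OF g x I J(1) J(2)] by blast
qed

lemma dext_closed: assumes g: "good d" and x: "x \<in> carrier C" shows "dext d x \<in> carrier C"
proof (rule C_memI)
  fix I assume I: "opn I"
  obtain J b where Jb: "opn J" "d ` J \<subseteq> I" "b \<in> x J" "dext d x I = I +> d b"
    using dext_exists[OF g x I] by blast
  show "dext d x I \<in> carrier (Q I)"
    using Jb(4) coset_in_Q[OF I good_carr[OF g C_rep(1)[OF x Jb(1) Jb(3)]]] by simp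
next
  fix I I' assume I: "opn I" and I': "opn I'" and II: "I \<subseteq> I'"
  obtain J b where Jb: "opn J" "d ` J \<subseteq> I" "b \<in> x J" "dext d x I = I +> d b"
    using dext_exists[OF g x I] by blast
  have "dext d x I' = I' +> d b" using dext_eval[OF g x I' Jb(1) _ Jb(3)] Jb(2) II by blast
  then show "dext d x I \<subseteq> dext d x I'" using Jb(4) coset_mono[OF II] by simp
qed (simp add: dext_def)

lemma dext_c: assumes g: "good d" and b: "b \<in> carrier B"
  shows "dext d (compl_map B F b) = compl_map B F (d b)"
proof (rule C_eqI)
  show "dext d (compl_map B F b) \<in> carrier C" using dext_closed[OF g c_carrier[OF b]] .
  show "compl_map B F (d b) \<in> carrier C" using c_carrier[OF good_carr[OF g b]] .
  fix I assume I: "opn I"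
  obtain J where J: "opn J" "d ` J \<subseteq> I" using good_J[OF g I] by blast
  have "b \<in> compl_map B F b J" using c_at[OF J(1)] coset_self[OF J(1) b] by simp
  then show "dext d (compl_map B F b) I = compl_map B F (d b) I"
    using dext_eval[OF g c_carrier[OF b] I J] c_at[OF I] by simp
qed


lemma C_add_mem: assumes x: "x \<in> carrier C" and y: "y \<in> carrier C" and J: "opn J"
  and a: "a \<in> x J" and b: "b \<in> y J" shows "a \<oplus> b \<in> (x \<oplus>\<^bsub>C\<^esub> y) J"
proof -
  have a': "a \<in> carrier B" "x J = J +> a" using C_rep[OF x J a] by auto
  have b': "b \<in> carrier B" "y J = J +> b" using C_rep[OF y J b] by auto
  show ?thesis using a' b' J by (simp add: C_add nu_add coset_self)
qed

lemma C_mult_mem: assumes x: "x \<in> carrier C" and y: "y \<in> carrier C" and J: "opn J"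
  and a: "a \<in> x J" and b: "b \<in> y J" shows "a \<otimes> b \<in> (x \<otimes>\<^bsub>C\<^esub> y) J"
proof -
  have a': "a \<in> carrier B" "x J = J +> a" using C_rep[OF x J a] by auto
  have b': "b \<in> carrier B" "y J = J +> b" using C_rep[OF y J b] by auto
  show ?thesis using a' b' J by (simp add: C_mult nu_mult coset_self)
qed

lemma C_eq_fine: assumes x: "x \<in> carrier C" and y: "y \<in> carrier C" and I: "opn I" and I0: "opn I0"
  and II: "I0 \<subseteq> I" and e: "x I0 = y I0" shows "x I = y I"
proof -
  obtain a where a: "a \<in> x I0" using C_ex[OF x I0] by blast
  show ?thesis using C_fine[OF x I I0 II a] C_fine[OF y I I0 II] a e by simp
qed

lemma dext_cont: assumes g: "good d"
  shows "top_continuous C (completion_fs B F) C (completion_fs B F) (dext d)"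
  unfolding top_continuous_def
proof (intro ballI allI impI)
  fix x I' assume x: "x \<in> carrier C" and I': "open_ideal C (completion_fs B F) I'"
  obtain I where I: "I \<in> F" "K I \<subseteq> I'" using openC_K[OF I'] by blast
  have Io: "opn I" using F_opn[OF I(1)] .
  obtain J0 where J0: "opn J0" "d ` J0 \<subseteq> I" using good_J[OF g Io] by blast
  obtain J1 where J1: "J1 \<in> F" "J1 \<subseteq> J0" using opn_F[OF J0(1)] by blast
  have J1o: "opn J1" using F_opn[OF J1(1)] .
  have dJ1: "d ` J1 \<subseteq> I" using J0(2) J1(2) by blast
  obtain b where b: "b \<in> x J1" using C_ex[OF x J1o] by blast
  have bc: "b \<in> carrier B" using C_rep[OF x J1o b] by blast
  have "\<forall>y\<in>carrier C. y \<ominus>\<^bsub>C\<^esub> x \<in> K J1 \<longrightarrow> dext d y \<ominus>\<^bsub>C\<^esub> dext d x \<in> I'"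
  proof (intro ballI impI)
    fix y assume y: "y \<in> carrier C" and yx: "y \<ominus>\<^bsub>C\<^esub> x \<in> K J1"
    have by': "b \<in> y J1" using K_minus[OF x y J1o b] yx by simp
    have ex: "dext d x I = I +> d b" using dext_eval[OF g x Io J1o dJ1 b] .
    have ey: "dext d y I = I +> d b" using dext_eval[OF g y Io J1o dJ1 by'] .
    have db: "d b \<in> dext d x I" using ex coset_self[OF Io good_carr[OF g bc]] by simp
    have "dext d y \<ominus>\<^bsub>C\<^esub> dext d x \<in> K I"
      using K_minus[OF dext_closed[OF g x] dext_closed[OF g y] Io db] ex ey db by simp
    then show "dext d y \<ominus>\<^bsub>C\<^esub> dext d x \<in> I'" using I(2) by blast
  qed
  then show "\<exists>J. open_ideal C (completion_fs B F) J \<and>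
      (\<forall>y\<in>carrier C. y \<ominus>\<^bsub>C\<^esub> x \<in> J \<longrightarrow> dext d y \<ominus>\<^bsub>C\<^esub> dext d x \<in> I')"
    using K_open[OF J1(1)] by blast
qed

lemma dext_add: assumes g: "good d" and x: "x \<in> carrier C" and y: "y \<in> carrier C"
  shows "dext d (x \<oplus>\<^bsub>C\<^esub> y) = dext d x \<oplus>\<^bsub>C\<^esub> dext d y"
proof (rule C_eqI)
  show "dext d (x \<oplus>\<^bsub>C\<^esub> y) \<in> carrier C" using dext_closed[OF g C_add_closed[OF x y]] .
  show "dext d x \<oplus>\<^bsub>C\<^esub> dext d y \<in> carrier C" using C_add_closed[OF dext_closed[OF g x] dext_closed[OF g y]] .
  fix I assume I: "opn I"
  obtain J where J: "opn J" "d ` J \<subseteq> I" using good_J[OF g I] by blast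
  obtain a b where ab: "a \<in> x J" "b \<in> y J" using C_ex[OF x J(1)] C_ex[OF y J(1)] by blast
  have ac: "a \<in> carrier B" and bc: "b \<in> carrier B" using C_rep[OF x J(1) ab(1)] C_rep[OF y J(1) ab(2)] by auto
  have "dext d (x \<oplus>\<^bsub>C\<^esub> y) I = I +> d (a \<oplus> b)"
    using dext_eval[OF g C_add_closed[OF x y] I J C_add_mem[OF x y J(1) ab]] .
  also have "\<dots> = I +> (d a \<oplus> d b)" using g ac bc unfolding good_def by simp
  also have "\<dots> = (I +> d a) \<oplus>\<^bsub>Q I\<^esub> (I +> d b)" using nu_add[OF I good_carr[OF g ac] good_carr[OF g bc]] by simp
  also have "\<dots> = (dext d x \<oplus>\<^bsub>C\<^esub> dext d y) I"
    using I dext_eval[OF g x I J ab(1)] dext_eval[OF g y I J ab(2)] by (simp add: C_add)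
  finally show "dext d (x \<oplus>\<^bsub>C\<^esub> y) I = (dext d x \<oplus>\<^bsub>C\<^esub> dext d y) I" .
qed

lemma dext_lin: assumes g: "good d" and s: "s \<in> carrier B" and ds: "\<And>b. b \<in> carrier B \<Longrightarrow> d (s \<otimes> b) = s \<otimes> d b"
  and x: "x \<in> carrier C"
  shows "dext d (compl_map B F s \<otimes>\<^bsub>C\<^esub> x) = compl_map B F s \<otimes>\<^bsub>C\<^esub> dext d x"
proof (rule C_eqI)
  have cs: "compl_map B F s \<in> carrier C" using c_carrier[OF s] .
  show "dext d (compl_map B F s \<otimes>\<^bsub>C\<^esub> x) \<in> carrier C" using dext_closed[OF g C_mult_closed[OF cs x]] .
  show "compl_map B F s \<otimes>\<^bsub>C\<^esub> dext d x \<in> carrier C" using C_mult_closed[OF cs dext_closed[OF g x]] .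
  fix I assume I: "opn I"
  obtain J where J: "opn J" "d ` J \<subseteq> I" using good_J[OF g I] by blast
  obtain b where b: "b \<in> x J" using C_ex[OF x J(1)] by blast
  have bc: "b \<in> carrier B" using C_rep[OF x J(1) b] by auto
  have sJ: "s \<in> compl_map B F s J" using c_at[OF J(1)] coset_self[OF J(1) s] by simp
  have "dext d (compl_map B F s \<otimes>\<^bsub>C\<^esub> x) I = I +> d (s \<otimes> b)"
    using dext_eval[OF g C_mult_closed[OF cs x] I J C_mult_mem[OF cs x J(1) sJ b]] .
  also have "\<dots> = I +> (s \<otimes> d b)" using ds[OF bc] by simp
  also have "\<dots> = (I +> s) \<otimes>\<^bsub>Q I\<^esub> (I +> d b)" using nu_mult[OF I s good_carr[OF g bc]] by simp
  also have "\<dots> = (compl_map B F s \<otimes>\<^bsub>C\<^esub> dext d x) I"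
    using I dext_eval[OF g x I J b] c_at[OF I] by (simp add: C_mult)
  finally show "dext d (compl_map B F s \<otimes>\<^bsub>C\<^esub> x) I = (compl_map B F s \<otimes>\<^bsub>C\<^esub> dext d x) I" .
qed

lemma dext_id: assumes g: "good d" and idd: "\<And>b. b \<in> carrier B \<Longrightarrow> d b = b" and x: "x \<in> carrier C"
  shows "dext d x = x"
proof (rule C_eqI)
  show "dext d x \<in> carrier C" using dext_closed[OF g x] .
  fix I assume I: "opn I"
  have dI: "d ` I \<subseteq> I" using idd opn_carrier[OF I] by auto
  obtain b where b: "b \<in> x I" using C_ex[OF x I] by blast
  have "b \<in> carrier B" "x I = I +> b" using C_rep[OF x I b] by auto
  then show "dext d x I = x I" using dext_eval[OF g x I I dI b] idd by simp
qed (rule x)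

lemma common_J: fixes D :: "nat \<Rightarrow> 'b \<Rightarrow> 'b" and n :: nat assumes g: "\<And>k. good (D k)" and I: "opn I"
  shows "\<exists>J. opn J \<and> (\<forall>k\<le>n. D k ` J \<subseteq> I)"
proof (induction n)
  case 0
  then show ?case using good_J[OF g I] by auto
next
  case (Suc n)
  then obtain J1 where J1: "opn J1" "\<forall>k\<le>n. D k ` J1 \<subseteq> I" by blast
  obtain J2 where J2: "opn J2" "D (Suc n) ` J2 \<subseteq> I" using good_J[OF g I] by blast
  have "\<forall>k\<le>Suc n. D k ` (J1 \<inter> J2) \<subseteq> I"
  proof (intro allI impI)
    fix k assume "k \<le> Suc n"
    then consider "k \<le> n" | "k = Suc n" by linarith
    then show "D k ` (J1 \<inter> J2) \<subseteq> I" using J1 J2 by cases blast+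
  qed
  then show ?case using opn_Int[OF J1(1) J2(1)] by blast
qed

lemma add_pow_0: "add_pow R (0::nat) a = \<zero>\<^bsub>R\<^esub>"
  by (simp add: add_pow_def nat_pow_def)
lemma add_pow_Suc: "add_pow R (Suc n) a = add_pow R n a \<oplus>\<^bsub>R\<^esub> a"
  by (simp add: add_pow_def nat_pow_def)

lemma hom_add_pow: assumes h: "ring_hom_cring R S h" and a: "a \<in> carrier R"
  shows "h (add_pow R (n::nat) a) = add_pow S n (h a) \<and> add_pow R n a \<in> carrier R"
proof (induction n)
  case 0
  interpret h: ring_hom_cring R S h by (rule h)
  show ?case by (simp add: add_pow_0)
next
  case (Suc n)
  interpret h: ring_hom_cring R S h by (rule h)
  show ?case using Suc a by (simp add: add_pow_Suc)
qed


lemma add_pow_closed_gen: assumes R: "cring R" and a: "a \<in> carrier R"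
  shows "add_pow R (n::nat) a \<in> carrier R"
proof (induction n)
  case 0
  interpret r: cring R by (rule R)
  show ?case by (simp add: add_pow_0)
next
  case (Suc n)
  interpret r: cring R by (rule R)
  show ?case using Suc a by (simp add: add_pow_Suc)
qed

end

context cmpl
begin

lemma dext_prod:
  fixes D :: "nat \<Rightarrow> 'b \<Rightarrow> 'b"
  assumes g: "\<And>k. good (D k)"
    and prod: "\<And>x y. x \<in> carrier B \<Longrightarrow> y \<in> carrier B \<Longrightarrow>
        D i (x \<otimes> y) = (\<Oplus>j\<in>{..i}. D j x \<otimes> D (i - j) y)"
    and x: "x \<in> carrier C" and y: "y \<in> carrier C"
  shows "dext (D i) (x \<otimes>\<^bsub>C\<^esub> y) = (\<Oplus>\<^bsub>C\<^esub>j\<in>{..i}. dext (D j) x \<otimes>\<^bsub>C\<^esub> dext (D (i - j)) y)"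
proof (rule C_eqI)
  interpret c: cring C by (rule C_cring)
  have fc: "(\<lambda>j. dext (D j) x \<otimes>\<^bsub>C\<^esub> dext (D (i - j)) y) \<in> {..i} \<rightarrow> carrier C"
    by (intro Pi_I C_mult_closed dext_closed g x y)
  show "dext (D i) (x \<otimes>\<^bsub>C\<^esub> y) \<in> carrier C" using dext_closed[OF g C_mult_closed[OF x y]] .
  show "(\<Oplus>\<^bsub>C\<^esub>j\<in>{..i}. dext (D j) x \<otimes>\<^bsub>C\<^esub> dext (D (i - j)) y) \<in> carrier C"
    using c.finsum_closed[OF fc] .
  fix I assume I: "opn I"
  interpret q: cring "Q I" using Q_cring[OF I] .
  have "\<exists>J. opn J \<and> (\<forall>k\<le>i. D k ` J \<subseteq> I)" by (rule common_J[OF g I])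
  then obtain J where J: "opn J" "\<forall>k\<le>i. D k ` J \<subseteq> I" by (elim exE conjE)
  obtain a b where ab: "a \<in> x J" "b \<in> y J" using C_ex[OF x J(1)] C_ex[OF y J(1)] by blast
  have ac: "a \<in> carrier B" and bc: "b \<in> carrier B" using C_rep[OF x J(1) ab(1)] C_rep[OF y J(1) ab(2)] by auto
  have fB: "(\<lambda>j. D j a \<otimes> D (i - j) b) \<in> {..i} \<rightarrow> carrier B"
    by (intro Pi_I m_closed good_carr[OF g] ac bc)
  have "dext (D i) (x \<otimes>\<^bsub>C\<^esub> y) I = I +> D i (a \<otimes> b)"
    using dext_eval[OF g C_mult_closed[OF x y] I J(1) _ C_mult_mem[OF x y J(1) ab]] J(2) by blast
  also have "\<dots> = I +> (\<Oplus>j\<in>{..i}. D j a \<otimes> D (i - j) b)" using prod ac bc by simp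
  also have "\<dots> = (\<Oplus>\<^bsub>Q I\<^esub>j\<in>{..i}. I +> (D j a \<otimes> D (i - j) b))"
    using ring_hom_cring.hom_finsum[OF nu_hom[OF I] fB] by (simp add: comp_def)
  also have "\<dots> = (\<Oplus>\<^bsub>Q I\<^esub>j\<in>{..i}. (dext (D j) x \<otimes>\<^bsub>C\<^esub> dext (D (i - j)) y) I)"
  proof (rule q.finsum_cong')
    show "(\<lambda>j. (dext (D j) x \<otimes>\<^bsub>C\<^esub> dext (D (i - j)) y) I) \<in> {..i} \<rightarrow> carrier (Q I)"
      by (intro Pi_I C_memD[OF _ I] C_mult_closed dext_closed g x y)
    fix j assume "j \<in> {..i}"
    then have jj: "j \<le> i" "i - j \<le> i" by auto
    have e1: "dext (D j) x I = I +> D j a" using dext_eval[OF g x I J(1) _ ab(1)] J(2) jj by blast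
    have e2: "dext (D (i - j)) y I = I +> D (i - j) b" using dext_eval[OF g y I J(1) _ ab(2)] J(2) jj by blast
    show "I +> (D j a \<otimes> D (i - j) b) = (dext (D j) x \<otimes>\<^bsub>C\<^esub> dext (D (i - j)) y) I"
      using I e1 e2 nu_mult[OF I good_carr[OF g ac] good_carr[OF g bc]] by (simp add: C_mult)
  qed simp
  also have "\<dots> = (\<Oplus>\<^bsub>C\<^esub>j\<in>{..i}. dext (D j) x \<otimes>\<^bsub>C\<^esub> dext (D (i - j)) y) I"
    using ring_hom_cring.hom_finsum[OF pi_hom[OF I] fc] by (simp add: comp_def)
  finally show "dext (D i) (x \<otimes>\<^bsub>C\<^esub> y) I = (\<Oplus>\<^bsub>C\<^esub>j\<in>{..i}. dext (D j) x \<otimes>\<^bsub>C\<^esub> dext (D (i - j)) y) I" .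
qed

lemma dext_iter:
  fixes D :: "nat \<Rightarrow> 'b \<Rightarrow> 'b"
  assumes g: "\<And>k. good (D k)"
    and it: "\<And>x. x \<in> carrier B \<Longrightarrow> D i (D j x) = add_pow B ((i + j) choose i) (D (i + j) x)"
    and x: "x \<in> carrier C"
  shows "dext (D i) (dext (D j) x) = add_pow C ((i + j) choose i) (dext (D (i + j)) x)"
proof (rule C_eqI)
  have xj: "dext (D j) x \<in> carrier C" using dext_closed[OF g x] .
  have xij: "dext (D (i + j)) x \<in> carrier C" using dext_closed[OF g x] .
  show "dext (D i) (dext (D j) x) \<in> carrier C" using dext_closed[OF g xj] .
  show "add_pow C ((i + j) choose i) (dext (D (i + j)) x) \<in> carrier C"
    using add_pow_closed_gen[OF C_cring xij] .
  fix I assume I: "opn I"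
  obtain J1 where J1: "opn J1" "D i ` J1 \<subseteq> I" using good_J[OF g I] by blast
  obtain J2 where J2: "opn J2" "D j ` J2 \<subseteq> J1" using good_J[OF g J1(1)] by blast
  obtain J3 where J3: "opn J3" "D (i + j) ` J3 \<subseteq> I" using good_J[OF g I] by blast
  have Jo: "opn (J2 \<inter> J3)" using opn_Int[OF J2(1) J3(1)] .
  have dJ2: "D j ` (J2 \<inter> J3) \<subseteq> J1" and dJ3: "D (i + j) ` (J2 \<inter> J3) \<subseteq> I" using J2 J3 by blast+
  obtain b where b: "b \<in> x (J2 \<inter> J3)" using C_ex[OF x Jo] by blast
  have bc: "b \<in> carrier B" using C_rep[OF x Jo b] by blast
  have e1: "dext (D j) x J1 = J1 +> D j b" using dext_eval[OF g x J1(1) Jo dJ2 b] .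
  have mem: "D j b \<in> dext (D j) x J1" using e1 coset_self[OF J1(1) good_carr[OF g bc]] by simp
  have "dext (D i) (dext (D j) x) I = I +> D i (D j b)" using dext_eval[OF g xj I J1 mem] .
  also have "\<dots> = I +> add_pow B ((i + j) choose i) (D (i + j) b)" using it[OF bc] by simp
  also have "\<dots> = add_pow (Q I) ((i + j) choose i) (I +> D (i + j) b)"
    using hom_add_pow[OF nu_hom[OF I] good_carr[OF g bc]] by simp
  also have "\<dots> = add_pow (Q I) ((i + j) choose i) (dext (D (i + j)) x I)"
    using dext_eval[OF g x I Jo dJ3 b] by simp
  also have "\<dots> = add_pow C ((i + j) choose i) (dext (D (i + j)) x) I"
    using hom_add_pow[OF pi_hom[OF I] xij] by simp
  finally show "dext (D i) (dext (D j) x) I = add_pow C ((i + j) choose i) (dext (D (i + j)) x) I" .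
qed

lemma uniq_at:
  assumes Ec: "E \<in> carrier C \<rightarrow> carrier C"
    and Econt: "top_continuous C (completion_fs B F) C (completion_fs B F) E"
    and Ec': "\<And>b. b \<in> carrier B \<Longrightarrow> E (compl_map B F b) = compl_map B F (d b)"
    and dc: "\<And>b. b \<in> carrier B \<Longrightarrow> d b \<in> carrier B"
    and x: "x \<in> carrier C" and I0: "I0 \<in> F"
  shows "\<exists>J1\<in>F. \<forall>J2\<in>F. J2 \<subseteq> J1 \<longrightarrow> (\<forall>b\<in>x J2. E x I0 = I0 +> d b)"
proof -
  have I0o: "opn I0" using F_opn[OF I0] .
  have "\<exists>J'. open_ideal C (completion_fs B F) J' \<and>
      (\<forall>y\<in>carrier C. y \<ominus>\<^bsub>C\<^esub> x \<in> J' \<longrightarrow> E y \<ominus>\<^bsub>C\<^esub> E x \<in> K I0)"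
    using Econt[unfolded top_continuous_def, rule_format, OF x K_open[OF I0]] .
  then obtain J' where J': "open_ideal C (completion_fs B F) J'"
    "\<And>y. y \<in> carrier C \<Longrightarrow> y \<ominus>\<^bsub>C\<^esub> x \<in> J' \<Longrightarrow> E y \<ominus>\<^bsub>C\<^esub> E x \<in> K I0" by blast
  obtain J1 where J1: "J1 \<in> F" "K J1 \<subseteq> J'" using openC_K[OF J'(1)] by blast
  have "\<forall>J2\<in>F. J2 \<subseteq> J1 \<longrightarrow> (\<forall>b\<in>x J2. E x I0 = I0 +> d b)"
  proof (intro ballI impI)
    fix J2 b assume J2: "J2 \<in> F" and JJ: "J2 \<subseteq> J1" and b: "b \<in> x J2"
    have J2o: "opn J2" using F_opn[OF J2] .
    have bc: "b \<in> carrier B" using C_rep[OF x J2o b] by blast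
    have cb: "compl_map B F b \<in> carrier C" using c_carrier[OF bc] .
    have "b \<in> compl_map B F b J2" using c_at[OF J2o] coset_self[OF J2o bc] by simp
    then have "compl_map B F b \<ominus>\<^bsub>C\<^esub> x \<in> K J2" using K_minus[OF x cb J2o b] by (rule iffD2[rotated])
    then have "compl_map B F b \<ominus>\<^bsub>C\<^esub> x \<in> J'"
      by (rule subsetD[OF J1(2) subsetD[OF K_mono[OF J2o F_opn[OF J1(1)] JJ]]])
    then have "E (compl_map B F b) \<ominus>\<^bsub>C\<^esub> E x \<in> K I0" by (rule J'(2)[OF cb])
    then have m: "compl_map B F (d b) \<ominus>\<^bsub>C\<^esub> E x \<in> K I0" by (simp only: Ec'[OF bc])
    have Ex: "E x \<in> carrier C" using Ec x by blast
    obtain e where e: "e \<in> E x I0" using C_ex[OF Ex I0o] by blast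
    have "e \<in> compl_map B F (d b) I0" using K_minus[OF Ex c_carrier[OF dc[OF bc]] I0o e] m by (rule iffD1)
    then have "e \<in> I0 +> d b" using c_at[OF I0o] by simp
    then show "E x I0 = I0 +> d b" using C_rep[OF Ex I0o e] coset_repr[OF I0o dc[OF bc]] by simp
  qed
  then show ?thesis using J1(1) by blast
qed

lemma uniq:
  assumes E1c: "E1 \<in> carrier C \<rightarrow> carrier C"
    and E1cont: "top_continuous C (completion_fs B F) C (completion_fs B F) E1"
    and E1c': "\<And>b. b \<in> carrier B \<Longrightarrow> E1 (compl_map B F b) = compl_map B F (d b)"
    and E2c: "E2 \<in> carrier C \<rightarrow> carrier C"
    and E2cont: "top_continuous C (completion_fs B F) C (completion_fs B F) E2"
    and E2c': "\<And>b. b \<in> carrier B \<Longrightarrow> E2 (compl_map B F b) = compl_map B F (d b)"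
    and dc: "\<And>b. b \<in> carrier B \<Longrightarrow> d b \<in> carrier B"
    and x: "x \<in> carrier C"
  shows "E1 x = E2 x"
proof (rule C_eqI)
  show "E1 x \<in> carrier C" using E1c x by blast
  show "E2 x \<in> carrier C" using E2c x by blast
  fix I assume I: "opn I"
  obtain I0 where I0: "I0 \<in> F" "I0 \<subseteq> I" using opn_F[OF I] by blast
  obtain J1 where J1: "J1 \<in> F" "\<forall>J2\<in>F. J2 \<subseteq> J1 \<longrightarrow> (\<forall>b\<in>x J2. E1 x I0 = I0 +> d b)"
    using uniq_at[OF E1c E1cont E1c' dc x I0(1)] by blast
  obtain J1' where J1': "J1' \<in> F" "\<forall>J2\<in>F. J2 \<subseteq> J1' \<longrightarrow> (\<forall>b\<in>x J2. E2 x I0 = I0 +> d b)"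
    using uniq_at[OF E2c E2cont E2c' dc x I0(1)] by blast
  obtain J2 where J2: "J2 \<in> F" "J2 \<subseteq> J1 \<inter> J1'" using F_dir[OF J1(1) J1'(1)] by blast
  obtain b where b: "b \<in> x J2" using C_ex[OF x F_opn[OF J2(1)]] by blast
  have "E1 x I0 = E2 x I0" using J1(2) J1'(2) J2 b by auto
  then show "E1 x I = E2 x I"
    using C_eq_fine[OF _ _ I F_opn[OF I0(1)] I0(2)] E1c E2c x by blast
qed

lemma integ:
  fixes D :: "nat \<Rightarrow> 'b \<Rightarrow> 'b"
  assumes g: "\<And>k. good (D k)" and ti: "top_integrable B F D"
  shows "top_integrable C (completion_fs B F) (\<lambda>n. dext (D n))"
  unfolding top_integrable_def
proof (intro ballI allI impI)
  fix x I' assume x: "x \<in> carrier C" and I': "open_ideal C (completion_fs B F) I'"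
  obtain I where I: "I \<in> F" "K I \<subseteq> I'" using openC_K[OF I'] by blast
  have Io: "opn I" using F_opn[OF I(1)] .
  have Iid: "ideal I B" using opn_ideal[OF Io] .
  obtain J0 n0 where J0: "opn J0" "\<forall>n\<ge>n0. \<forall>y\<in>carrier B. y \<ominus> \<zero> \<in> J0 \<longrightarrow> D n y \<in> I"
    using ti[unfolded top_integrable_def, rule_format, OF zero_closed Io] by blast
  obtain J1 where J1: "J1 \<in> F" "J1 \<subseteq> J0" using opn_F[OF J0(1)] by blast
  have J1o: "opn J1" using F_opn[OF J1(1)] .
  obtain b where b: "b \<in> x J1" using C_ex[OF x J1o] by blast
  have bc: "b \<in> carrier B" using C_rep[OF x J1o b] by blast
  obtain Jb nb where Jb: "opn Jb" "\<forall>n\<ge>nb. \<forall>y\<in>carrier B. y \<ominus> b \<in> Jb \<longrightarrow> D n y \<in> I"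
    using ti[unfolded top_integrable_def, rule_format, OF bc Io] by blast
  have "b \<ominus> b = \<zero>" using bc by (simp add: minus_eq r_neg)
  moreover have "\<zero> \<in> Jb" using ideal.axioms(1)[OF opn_ideal[OF Jb(1)]] additive_subgroup.zero_closed by blast
  ultimately have bbJ: "b \<ominus> b \<in> Jb" by simp
  have Dnb: "D n b \<in> I" if "n \<ge> nb" for n using Jb(2) bc bbJ that by blast
  have "\<forall>n\<ge>max n0 nb. \<forall>y\<in>carrier C. y \<ominus>\<^bsub>C\<^esub> x \<in> K J1 \<longrightarrow> dext (D n) y \<in> I'"
  proof (intro allI impI ballI)
    fix n y assume n: "max n0 nb \<le> n" and y: "y \<in> carrier C" and yx: "y \<ominus>\<^bsub>C\<^esub> x \<in> K J1"
    have by': "b \<in> y J1" using K_minus[OF x y J1o b] yx by (rule iffD1)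
    obtain Jn where Jn: "opn Jn" "D n ` Jn \<subseteq> I" using good_J[OF g Io] by blast
    have Lo: "opn (Jn \<inter> J1)" using opn_Int[OF Jn(1) J1o] .
    obtain y' where y': "y' \<in> y (Jn \<inter> J1)" using C_ex[OF y Lo] by blast
    have y'1: "y' \<in> y J1" using C_compat[OF y Lo J1o] y' by blast
    have y'c: "y' \<in> carrier B" using C_rep[OF y Lo y'] by blast
    have ev: "dext (D n) y I = I +> D n y'" using dext_eval[OF g y Io Lo _ y'] Jn(2) by blast
    have "J1 +> y' = J1 +> b" using C_rep[OF y J1o y'1] C_rep[OF y J1o by'] by simp
    then have "y' \<ominus> b \<in> J1" using coset_eq_iff[OF J1o y'c bc] by simp
    then have "y' \<ominus> b \<in> J0" using J1(2) by blast
    moreover have "(y' \<ominus> b) \<ominus> \<zero> = y' \<ominus> b" using y'c bc by (simp add: minus_eq)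
    ultimately have "D n (y' \<ominus> b) \<in> I" using J0(2) n y'c bc by auto
    then have m1: "D n y' \<ominus> D n b \<in> I" using good_minus[OF g y'c bc] by simp
    have m2: "D n b \<in> I" using Dnb n by simp
    have "D n y' = (D n y' \<ominus> D n b) \<oplus> D n b"
      using good_carr[OF g y'c] good_carr[OF g bc] by (simp add: minus_eq a_assoc l_neg)
    also have "\<dots> \<in> I" using m1 m2 additive_subgroup.a_closed[OF ideal.axioms(1)[OF Iid]] by blast
    finally have "D n y' \<in> I" .
    then have "dext (D n) y I = I" using ev coset_zero[OF Io] by simp
    then have "dext (D n) y \<in> K I" using dext_closed[OF g y] by simp
    then show "dext (D n) y \<in> I'" using I(2) by blast
  qed
  then show "\<exists>Ic n0. open_ideal C (completion_fs B F) Ic \<and>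
      (\<forall>n\<ge>n0. \<forall>y\<in>carrier C. y \<ominus>\<^bsub>C\<^esub> x \<in> Ic \<longrightarrow> dext (D n) y \<in> I')"
    using K_open[OF J1(1)] by blast
qed

lemma dext_Pi: "good d \<Longrightarrow> dext d \<in> carrier C \<rightarrow> carrier C"
  using dext_closed by blast

lemma main_deriv:
  fixes A :: "('a, 'm) ring_scheme" and phi :: "'a \<Rightarrow> 'b" and D :: "nat \<Rightarrow> 'b \<Rightarrow> 'b"
  assumes phi: "phi \<in> ring_hom A B" and cd: "cont_iter_higher_deriv A B F phi D"
  shows "cont_iter_higher_deriv A C (completion_fs B F) (compl_map B F \<circ> phi) (\<lambda>i. dext (D i))"
    and "\<And>i. good (D i)"
proof -
  have Dc: "\<And>i. D i \<in> carrier B \<rightarrow> carrier B"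
    using cd unfolding cont_iter_higher_deriv_def by blast
  have Dct: "\<And>i. top_continuous B F B F (D i)"
    using cd unfolding cont_iter_higher_deriv_def by blast
  have Dadd: "\<And>i x y. x \<in> carrier B \<Longrightarrow> y \<in> carrier B \<Longrightarrow> D i (x \<oplus> y) = D i x \<oplus> D i y"
    using cd unfolding cont_iter_higher_deriv_def by blast
  have Dlin: "\<And>i a x. a \<in> carrier A \<Longrightarrow> x \<in> carrier B \<Longrightarrow> D i (phi a \<otimes> x) = phi a \<otimes> D i x"
    using cd unfolding cont_iter_higher_deriv_def by blast
  have D0: "\<And>x. x \<in> carrier B \<Longrightarrow> D 0 x = x"
    using cd unfolding cont_iter_higher_deriv_def by blast
  have Dprod: "\<And>i x y. x \<in> carrier B \<Longrightarrow> y \<in> carrier B \<Longrightarrow>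
      D i (x \<otimes> y) = (\<Oplus>j\<in>{..i}. D j x \<otimes> D (i - j) y)"
    using cd unfolding cont_iter_higher_deriv_def by blast
  have Dit: "\<And>i j x. x \<in> carrier B \<Longrightarrow> D i (D j x) = add_pow B ((i + j) choose i) (D (i + j) x)"
    using cd unfolding cont_iter_higher_deriv_def by blast
  have g: "\<And>i. good (D i)" using good_of[OF Dc Dadd Dct] .
  show "\<And>i. good (D i)" by (rule g)
  have pc: "\<And>a. a \<in> carrier A \<Longrightarrow> phi a \<in> carrier B" using ring_hom_closed[OF phi] .
  have f1: "\<forall>i. dext (D i) \<in> carrier C \<rightarrow> carrier C" using dext_Pi[OF g] by blast
  have f2: "\<forall>i. top_continuous C (completion_fs B F) C (completion_fs B F) (dext (D i))"
    using dext_cont[OF g] by blast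
  have f3: "\<forall>i. \<forall>x\<in>carrier C. \<forall>y\<in>carrier C.
      dext (D i) (x \<oplus>\<^bsub>C\<^esub> y) = dext (D i) x \<oplus>\<^bsub>C\<^esub> dext (D i) y"
    using dext_add[OF g] by blast
  have f4: "\<forall>i. \<forall>a\<in>carrier A. \<forall>x\<in>carrier C.
      dext (D i) ((compl_map B F \<circ> phi) a \<otimes>\<^bsub>C\<^esub> x) = (compl_map B F \<circ> phi) a \<otimes>\<^bsub>C\<^esub> dext (D i) x"
  proof (intro allI ballI)
    fix i a x assume a: "a \<in> carrier A" and x: "x \<in> carrier C"
    show "dext (D i) ((compl_map B F \<circ> phi) a \<otimes>\<^bsub>C\<^esub> x) = (compl_map B F \<circ> phi) a \<otimes>\<^bsub>C\<^esub> dext (D i) x"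
      using dext_lin[OF g pc[OF a] Dlin[OF a] x] by (simp only: comp_def)
  qed
  have f5: "\<forall>x\<in>carrier C. dext (D 0) x = x"
    using dext_id[OF g D0] by blast
  have f6: "\<forall>i. \<forall>x\<in>carrier C. \<forall>y\<in>carrier C.
      dext (D i) (x \<otimes>\<^bsub>C\<^esub> y) = (\<Oplus>\<^bsub>C\<^esub>j\<in>{..i}. dext (D j) x \<otimes>\<^bsub>C\<^esub> dext (D (i - j)) y)"
  proof (intro allI ballI)
    fix i x y assume x: "x \<in> carrier C" and y: "y \<in> carrier C"
    show "dext (D i) (x \<otimes>\<^bsub>C\<^esub> y) = (\<Oplus>\<^bsub>C\<^esub>j\<in>{..i}. dext (D j) x \<otimes>\<^bsub>C\<^esub> dext (D (i - j)) y)"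
      by (rule dext_prod[OF g Dprod x y])
  qed
  have f7: "\<forall>i j. \<forall>x\<in>carrier C.
      dext (D i) (dext (D j) x) = add_pow C ((i + j) choose i) (dext (D (i + j)) x)"
  proof (intro allI ballI)
    fix i j x assume x: "x \<in> carrier C"
    show "dext (D i) (dext (D j) x) = add_pow C ((i + j) choose i) (dext (D (i + j)) x)"
      by (rule dext_iter[OF g Dit x])
  qed
  show "cont_iter_higher_deriv A C (completion_fs B F) (compl_map B F \<circ> phi) (\<lambda>i. dext (D i))"
    unfolding cont_iter_higher_deriv_def using f1 f2 f3 f4 f5 f6 f7 by (intro conjI) assumption+
qed

end

theorem lemma2p24:
  fixes A :: "('a, 'm) ring_scheme" and B :: "('b, 'n) ring_scheme"
    and FA :: "'a set set" and FB :: "'b set set" and phi :: "'a \<Rightarrow> 'b"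
    and D :: "nat \<Rightarrow> 'b \<Rightarrow> 'b"
  assumes "top_algebra A FA B FB phi"
    and "cont_iter_higher_deriv A B FB phi D"
  shows "\<exists>Dh. cont_iter_higher_deriv A (completion B FB) (completion_fs B FB)
                 (compl_map B FB \<circ> phi) Dh
           \<and> (\<forall>i. \<forall>b\<in>carrier B. Dh i (compl_map B FB b) = compl_map B FB (D i b))
           \<and> (\<forall>Dh'. cont_iter_higher_deriv A (completion B FB) (completion_fs B FB)
                      (compl_map B FB \<circ> phi) Dh'
                    \<and> (\<forall>i. \<forall>b\<in>carrier B. Dh' i (compl_map B FB b) = compl_map B FB (D i b))
                    \<longrightarrow> (\<forall>i. \<forall>x\<in>carrier (completion B FB). Dh' i x = Dh i x))
           \<and> (top_integrable B FB D \<longrightarrow> top_integrable (completion B FB) (completion_fs B FB) Dh)"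
proof -
  have cm: "cmpl B FB" using assms(1) unfolding top_algebra_def cmpl_def by blast
  have phi: "phi \<in> ring_hom A B" using assms(1) unfolding top_algebra_def by blast
  note M1 = cmpl.main_deriv(1)[OF cm phi assms(2)]
  note g = cmpl.main_deriv(2)[OF cm phi assms(2)]
  define Dh where "Dh = (\<lambda>i. cmpl.dext B FB (D i))"
  have agree: "\<forall>i. \<forall>b\<in>carrier B. Dh i (compl_map B FB b) = compl_map B FB (D i b)"
    unfolding Dh_def using cmpl.dext_c[OF cm g] by blast
  have un: "\<forall>Dh'. cont_iter_higher_deriv A (completion B FB) (completion_fs B FB)
                      (compl_map B FB \<circ> phi) Dh'
                    \<and> (\<forall>i. \<forall>b\<in>carrier B. Dh' i (compl_map B FB b) = compl_map B FB (D i b))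
                    \<longrightarrow> (\<forall>i. \<forall>x\<in>carrier (completion B FB). Dh' i x = Dh i x)"
  proof (intro allI impI ballI)
    fix Dh' i x
    assume h: "cont_iter_higher_deriv A (completion B FB) (completion_fs B FB) (compl_map B FB \<circ> phi) Dh'
        \<and> (\<forall>i. \<forall>b\<in>carrier B. Dh' i (compl_map B FB b) = compl_map B FB (D i b))"
      and x: "x \<in> carrier (completion B FB)"
    have E1c: "Dh' i \<in> carrier (completion B FB) \<rightarrow> carrier (completion B FB)"
      using h unfolding cont_iter_higher_deriv_def by blast
    have E1cont: "top_continuous (completion B FB) (completion_fs B FB) (completion B FB) (completion_fs B FB) (Dh' i)"
      using h unfolding cont_iter_higher_deriv_def by blast
    have E1c': "\<And>b. b \<in> carrier B \<Longrightarrow> Dh' i (compl_map B FB b) = compl_map B FB (D i b)"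
      using h by blast
    have dc: "\<And>b. b \<in> carrier B \<Longrightarrow> D i b \<in> carrier B" using cmpl.good_carr[OF cm g] .
    show "Dh' i x = Dh i x" unfolding Dh_def
      by (rule cmpl.uniq[OF cm E1c E1cont E1c' cmpl.dext_Pi[OF cm g] cmpl.dext_cont[OF cm g]
            cmpl.dext_c[OF cm g] dc x])
  qed
  have int: "top_integrable B FB D \<longrightarrow> top_integrable (completion B FB) (completion_fs B FB) Dh"
    unfolding Dh_def using cmpl.integ[where D=D, OF cm g] by blast
  show ?thesis
    using M1 agree un int unfolding Dh_def by blast
qed

end
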